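(* Let $k\ge1$, let $\alpha=(\alpha_1,\dots,\alpha_k)$ and $\beta=(\beta_1,\dots,\beta_k)$ be $k$-tuples of nonnegative integers, and let $\sigma,\tau$ be permutations of $\{1,\dots,k\}$. Write $\sigma(\alpha)=(\alpha_{\sigma_1},\dots,\alpha_{\sigma_k})$ and $\tau(\beta)=(\beta_{\tau_1},\dots,\beta_{\tau_k})$. If $\tilde M_k(\sigma(\alpha),\tau(\beta))\ne0$, then $\alpha_{\sigma_1}=\cdots=\alpha_{\sigma_{k-|\alpha|}}=0$ and $\beta_{\tau_1}=\cdots=\beta_{\tau_{k-|\beta|}}=0$ (conditions that are vacuous when $|\alpha|\ge k$, resp. $|\beta|\ge k$).
   Context: $|\alpha|=\sum_i\alpha_i$. For $k$-tuples $a=(a_1,\dots,a_k)$, $b=(b_1,\dots,b_k)$ of nonnegative integers, $\tilde M_k(a,b)=(-1)^{\sum_i b_i}\det(m_{ij})_{1\le i,j\le 2k}$, where for $1\le i\le k$, $1\le j\le 2k$: $m_{ij}=\Gamma(2k-i-j+2-a_i)^{-1}$ and $m_{k+i,j}=(-1)^{i+j-1}\Gamma(2k-i-j+2-b_i)^{-1}$, with the convention $1/\Gamma(m)=0$ for $m\in\{0,-1,-2,\dots\}$. *)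

theory Defs
  imports "HOL-Analysis.Analysis"
begin

(* Determinant of an n x n matrix given as a function on {0..<n} x {0..<n},
   via the Leibniz formula (the size n varies, so no type-indexed matrices). *)
definition det_n :: "nat \<Rightarrow> (nat \<Rightarrow> nat \<Rightarrow> real) \<Rightarrow> real" where
  "det_n n A = (\<Sum>p | p permutes {0..<n}. of_int (sign p) * (\<Prod>i<n. A i (p i)))"

(* The matrix (m_ij) with 0-based indices i,j < 2k (paper index = ours + 1).
   1/Gamma is rGamma, which vanishes at 0,-1,-2,... *)
definition Mmat :: "nat \<Rightarrow> (nat \<Rightarrow> nat) \<Rightarrow> (nat \<Rightarrow> nat) \<Rightarrow> nat \<Rightarrow> nat \<Rightarrow> real" where
  "Mmat k a b i j =
     (if i < k then rGamma (of_int (2 * int k - int i - int j - int (a i)))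
      else (-1) ^ ((i - k) + j + 1) * rGamma (of_int (2 * int k - int (i - k) - int j - int (b (i - k)))))"

definition Mtilde :: "nat \<Rightarrow> (nat \<Rightarrow> nat) \<Rightarrow> (nat \<Rightarrow> nat) \<Rightarrow> real" where
  "Mtilde k a b = (-1) ^ (\<Sum>i<k. b i) * det_n (2 * k) (Mmat k a b)"

end

theory Submission
  imports Defs
begin

lemma det_n_prop_rows:
  assumes "i < n" "i' < n" "i \<noteq> i'" "\<And>j. A i j = c * A i' j"
  shows "det_n n A = 0"
proof -
  let ?U = "{0..<n}"
  let ?t = "Transposition.transpose i i'"
  let ?f = "\<lambda>p. of_int (sign p) * (\<Prod>l<n. A l (p l))"
  have key: "?f (p \<circ> ?t) = - ?f p" if p: "p permutes ?U" for p
  proof -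
    have sg: "sign (p \<circ> ?t) = - sign p"
      using sign_compose[OF permutes_imp_permutation[OF _ p] permutation_swap_id]
      by (simp add: sign_swap_id assms(3))
    have fin: "finite {..<n}" by simp
    have split: "(\<Prod>l<n. g l) = g i * g i' * (\<Prod>l\<in>{..<n} - {i} - {i'}. g l)" for g :: "nat \<Rightarrow> real"
    proof -
      have "(\<Prod>l<n. g l) = g i * (\<Prod>l\<in>{..<n} - {i}. g l)"
        using prod.remove[OF fin, of i g] assms by simp
      also have "(\<Prod>l\<in>{..<n} - {i}. g l) = g i' * (\<Prod>l\<in>{..<n} - {i} - {i'}. g l)"
        using prod.remove[of "{..<n} - {i}" i' g] assms by simp
      finally show ?thesis by simp
    qed
    have rest: "(\<Prod>l\<in>{..<n} - {i} - {i'}. A l ((p \<circ> ?t) l)) = (\<Prod>l\<in>{..<n} - {i} - {i'}. A l (p l))"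
      by (rule prod.cong) (auto simp: Transposition.transpose_def)
    have "(\<Prod>l<n. A l ((p \<circ> ?t) l)) = (\<Prod>l<n. A l (p l))"
      using split[of "\<lambda>l. A l ((p \<circ> ?t) l)"] split[of "\<lambda>l. A l (p l)"]
        rest assms(4)[of "p i"] assms(4)[of "p i'"] by (simp add: assms(3))
    then show ?thesis using sg by simp
  qed
  have bij: "bij_betw (\<lambda>p. p \<circ> ?t) {p. p permutes ?U} {p. p permutes ?U}"
  proof (rule bij_betw_byWitness[where f' = "\<lambda>p. p \<circ> ?t"])
    show "\<forall>p\<in>{p. p permutes ?U}. p \<circ> ?t \<circ> ?t = p" by (auto simp: comp_assoc)
    show "\<forall>p\<in>{p. p permutes ?U}. p \<circ> ?t \<circ> ?t = p" by (auto simp: comp_assoc)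
    have "p \<circ> ?t permutes ?U" if "p permutes ?U" for p
      using permutes_compose[OF permutes_swap_id that] assms by simp
    then show "(\<lambda>p. p \<circ> ?t) ` {p. p permutes ?U} \<subseteq> {p. p permutes ?U}"
      "(\<lambda>p. p \<circ> ?t) ` {p. p permutes ?U} \<subseteq> {p. p permutes ?U}" by auto
  qed
  have "det_n n A = (\<Sum>p | p permutes ?U. ?f (p \<circ> ?t))"
    unfolding det_n_def using sum.reindex_bij_betw[OF bij, of ?f] by simp
  also have "\<dots> = (\<Sum>p | p permutes ?U. - ?f p)"
    by (rule sum.cong[OF refl]) (use key in blast)
  also have "\<dots> = - det_n n A"
    unfolding det_n_def by (simp add: sum_negf)
  finally show ?thesis by simp
qed

lemma chain:
  fixes a :: "nat \<Rightarrow> nat"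
  assumes inj: "\<And>i j. i < k \<Longrightarrow> j < k \<Longrightarrow> i + a i = j + a j \<Longrightarrow> i = j"
  shows "x < k \<Longrightarrow> 0 < a x \<Longrightarrow> k - x \<le> (\<Sum>i\<in>{x..<k}. a i)"
proof (induct "k - x" arbitrary: x rule: less_induct)
  case less
  have sx: "(\<Sum>i\<in>{x..<k}. a i) = a x + (\<Sum>i\<in>{Suc x..<k}. a i)"
    using less.prems by (simp add: sum.atLeast_Suc_lessThan)
  show ?case
  proof (cases "x + a x < k")
    case False then show ?thesis using sx by linarith
  next
    case True
    define y where "y = x + a x"
    have "a y > 0"
    proof (rule ccontr)
      assume "\<not> 0 < a y"
      then have "y + a y = x + a x" by (simp add: y_def)
      then have "y = x" using inj[of y x] True less.prems by (simp add: y_def)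
      then show False using less.prems by (simp add: y_def)
    qed
    then have ih: "k - y \<le> (\<Sum>i\<in>{y..<k}. a i)"
      using less.hyps[of y] True less.prems by (simp add: y_def)
    have "(\<Sum>i\<in>{y..<k}. a i) \<le> (\<Sum>i\<in>{Suc x..<k}. a i)"
      by (rule sum_mono2) (use less.prems in \<open>auto simp: y_def\<close>)
    then show ?thesis using sx ih True y_def by linarith
  qed
qed

lemma chain_main:
  fixes a :: "nat \<Rightarrow> nat"
  assumes inj: "\<And>i j. i < k \<Longrightarrow> j < k \<Longrightarrow> i + a i = j + a j \<Longrightarrow> i = j"
  shows "\<forall>r < k - (\<Sum>i<k. a i). a r = 0"
proof (intro allI impI)
  fix r assume r: "r < k - (\<Sum>i<k. a i)"
  show "a r = 0"
  proof (rule ccontr)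
    assume "a r \<noteq> 0"
    then have "k - r \<le> (\<Sum>i\<in>{r..<k}. a i)" using chain[of k a r] inj r by auto
    also have "\<dots> \<le> (\<Sum>i<k. a i)" by (rule sum_mono2) auto
    finally show False using r by linarith
  qed
qed

lemma sum_perm:
  fixes \<sigma> :: "nat \<Rightarrow> nat" and k :: nat
  assumes "\<sigma> permutes {0..<k}"
  shows "(\<Sum>i<k. (\<alpha> \<circ> \<sigma>) i) = (\<Sum>i<k. (\<alpha> i :: nat))"
proof -
  have "bij_betw \<sigma> {..<k} {..<k}" using permutes_imp_bij[OF assms] atLeast0LessThan by metis
  then show ?thesis using sum.reindex_bij_betw[of \<sigma> "{..<k}" "{..<k}" \<alpha>] by simp
qed

theorem lemma5:
  fixes k :: nat and \<alpha> \<beta> :: "nat \<Rightarrow> nat" and \<sigma> \<tau> :: "nat \<Rightarrow> nat"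
  assumes "k \<ge> 1"
    and "\<sigma> permutes {0..<k}" and "\<tau> permutes {0..<k}"
    and "Mtilde k (\<alpha> \<circ> \<sigma>) (\<beta> \<circ> \<tau>) \<noteq> 0"
  shows "(\<forall>r < k - (\<Sum>i<k. \<alpha> i). \<alpha> (\<sigma> r) = 0)
       \<and> (\<forall>r < k - (\<Sum>i<k. \<beta> i). \<beta> (\<tau> r) = 0)"
proof -
  define a where "a = \<alpha> \<circ> \<sigma>"
  define b where "b = \<beta> \<circ> \<tau>"
  have D: "det_n (2 * k) (Mmat k a b) \<noteq> 0"
    using assms(4) unfolding Mtilde_def a_def b_def by simp
  have ia: "i = j" if "i < k" "j < k" "i + a i = j + a j" for i j
  proof (rule ccontr)
    assume ne: "i \<noteq> j"
    have "det_n (2 * k) (Mmat k a b) = 0"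
    proof (rule det_n_prop_rows[where c = 1])
      fix l
      have "real i + real (a i) = real j + real (a j)" using that(3) by (metis of_nat_add)
      then have "2 * real k - real i - real l - real (a i) = 2 * real k - real j - real l - real (a j)"
        by linarith
      then have "rGamma (2 * real k - real i - real l - real (a i)) = rGamma (2 * real k - real j - real l - real (a j))" by (rule arg_cong[where f=rGamma])
      then show "Mmat k a b i l = 1 * Mmat k a b j l" using that by (simp add: Mmat_def)
    qed (use that ne in auto)
    then show False using D by simp
  qed
  have ib: "i = j" if "i < k" "j < k" "i + b i = j + b j" for i j
  proof (rule ccontr)
    assume ne: "i \<noteq> j"
    have "det_n (2 * k) (Mmat k a b) = 0"
    proof (rule det_n_prop_rows[where i = "k + i" and i' = "k + j" and c = "(-1) ^ (i + j)"])
      fix l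
      have "real i + real (b i) = real j + real (b j)" using that(3) by (metis of_nat_add)
      then have e: "2 * real k - real i - real l - real (b i) = 2 * real k - real j - real l - real (b j)"
        by linarith
      have s: "((-1::real) ^ (i + l + 1)) = (-1) ^ (i + j) * (-1) ^ (j + l + 1)"
      proof -
        have "(-1::real) ^ (i + j) * (-1) ^ (j + l + 1) = (-1) ^ (i + l + 1) * ((-1) ^ j) ^ 2"
          by (simp add: power_add power2_eq_square)
        also have "\<dots> = (-1) ^ (i + l + 1)" by (simp add: power_even_eq[symmetric] flip: power_mult)
        finally show ?thesis by simp
      qed
      show "Mmat k a b (k + i) l = (-1) ^ (i + j) * Mmat k a b (k + j) l"
        using s by (simp add: Mmat_def e)
    qed (use that ne in auto)
    then show False using D by simp
  qed
  have A: "\<forall>r < k - (\<Sum>i<k. a i). a r = 0" by (rule chain_main) (use ia in auto)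
  have B: "\<forall>r < k - (\<Sum>i<k. b i). b r = 0" by (rule chain_main) (use ib in auto)
  show ?thesis
    using A B sum_perm[OF assms(2), of \<alpha>] sum_perm[OF assms(3), of \<beta>]
    unfolding a_def b_def by simp
qed

end
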